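(* Let $X,X_1,X_2,\dots$ be i.i.d. real random variables with $EX=0$ and $E|X|^{2+\varepsilon}<\infty$ for some $\varepsilon>0$. Let $\mu>0$, $m\ge1$, $\delta\in(0,1/2]$ and $\alpha$ satisfy $2<\alpha\le(2+\varepsilon)(1-\delta)$, and assume $$\frac{6\cdot 2^{\alpha}}{(\alpha-1)(m+1)^{\alpha-1}\mu}\,E\big[(X^+)^{2+\varepsilon}\big]\le1.$$ Let $n_k=2^{k-1}$, $\bar G(t)=\int_t^\infty(1+s)^{-\alpha}ds$, $g(k)=\big(\bar G(m+\mu n_{k-1})-\bar G(m+\mu n_k)\big)/\bar G(m+\mu n_1)$ for $k\ge2$, and $$B_k=\bigcap_{j=1}^{n_k-1}\{X_j\le(\mu n_{k-1}+m)^{1-\delta}\}.$$ Then $$\frac{3P(B_k^c)}{g(k)}\le1\qquad\text{for all }k\ge2.$$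
   Context: $X^+=\max(X,0)$; $B_k^c$ is the complement of $B_k$. *)

theory Defs
  imports "HOL-Probability.Probability"
begin

definition nblk :: "nat \<Rightarrow> nat" where
  "nblk k = 2 ^ (k - 1)"

definition Gbar :: "real \<Rightarrow> real \<Rightarrow> real" where
  "Gbar \<alpha> t = (LBINT s:{t..}. (1 + s) powr (- \<alpha>))"

definition gfun :: "real \<Rightarrow> real \<Rightarrow> real \<Rightarrow> nat \<Rightarrow> real" where
  "gfun \<alpha> m \<mu> k =
     (Gbar \<alpha> (m + \<mu> * real (nblk (k - 1))) - Gbar \<alpha> (m + \<mu> * real (nblk k)))
     / Gbar \<alpha> (m + \<mu> * real (nblk 1))"

definition Bev :: "'a measure \<Rightarrow> (nat \<Rightarrow> 'a \<Rightarrow> real) \<Rightarrow> real \<Rightarrow> real \<Rightarrow> real \<Rightarrow> nat \<Rightarrow> 'a set" where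
  "Bev M X \<mu> m \<delta> k =
     {\<omega> \<in> space M. \<forall>j \<in> {1..nblk k - 1}.
        X j \<omega> \<le> (\<mu> * real (nblk (k - 1)) + m) powr (1 - \<delta>)}"

end

theory Submission imports Defs begin


lemma hi: fixes a t :: real assumes "a > 1" "t \<ge> 0"
  shows "((\<lambda>s. (1 + s) powr (- a)) has_integral (1+t) powr (1-a)/(a-1)) {t..}"
proof (intro has_integral_to_inf integrable_continuous_interval continuous_intros)
  define F where "F \<equiv> \<lambda>x::real. (1+x) powr (1-a) / (1-a)"
  have "((\<lambda>x. (1+x) powr (-a)) has_integral (F y - F t)) {t..y}" if "y \<ge> t" for y
    unfolding F_def using assms
    by (intro fundamental_theorem_of_calculus that)
       (auto intro!: derivative_eq_intros
               simp flip: has_real_derivative_iff_has_vector_derivative)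
  then have ev: "\<forall>\<^sub>F y in at_top. integral {t..y} (\<lambda>x. (1+x) powr (-a)) = F y - F t"
    by (meson eventually_at_top_linorderI integral_unique)
  have lim: "((\<lambda>y::real. F y - F t) \<longlongrightarrow> - F t) at_top"
  proof -
    have L: "((\<lambda>y::real. (1+y) powr (1-a)) \<longlongrightarrow> 0) at_top"
      using assms by (intro tendsto_neg_powr filterlim_tendsto_add_at_top[OF tendsto_const filterlim_ident]) auto
    have "((\<lambda>y::real. F y - F t) \<longlongrightarrow> 0/(1-a) - F t) at_top"
      unfolding F_def using assms by (intro tendsto_intros L) auto
    then show ?thesis by simp
  qed
  have eq: "- F t = (1+t) powr (1-a)/(a-1)" unfolding F_def using assms by (simp add: field_simps)
  have "((\<lambda>y. integral {t..y} (\<lambda>x. (1+x) powr (-a))) \<longlongrightarrow> - F t) at_top"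
    apply (rule Lim_transform_eventually[OF lim])
    using ev by (rule eventually_mono) simp
  then show "((\<lambda>y. integral {t..y} (\<lambda>x. (1+x) powr (-a)))  \<longlongrightarrow> (1+t) powr (1-a)/(a-1)) at_top"
    using eq by simp
qed (use assms in auto)

lemma Gbar_eq: fixes a t :: real assumes "a > 1" "t \<ge> 0"
  shows "Gbar a t = (1+t) powr (1-a)/(a-1)"
proof -
  note H = hi[OF assms]
  have nn: "integral\<^sup>N lborel (\<lambda>x. ennreal ((1 + x) powr (- a)) * indicator {t..} x) = ennreal ((1+t) powr (1-a)/(a-1))"
    by (rule nn_integral_has_integral_lebesgue'[OF _ H]) auto
  have si: "set_integrable lborel {t..} (\<lambda>s. (1 + s) powr (- a))"
    unfolding set_integrable_def
    apply (rule integrableI_nonneg)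
    apply (auto)[2]
    apply (subst nn_integral_cong[where v="\<lambda>x. ennreal ((1 + x) powr (- a)) * indicator {t..} x"])
     apply (auto simp: indicator_def)[1]
    using nn by simp
  show ?thesis unfolding Gbar_def
    using set_borel_integral_eq_integral(2)[OF si] integral_unique[OF H] by simp
qed


lemma mvt_ineq: fixes a b al :: real assumes "0 < a" "a \<le> b" "al > 1"
  shows "(al-1)*(b-a)*b powr (-al) \<le> a powr (1-al) - b powr (1-al)"
proof (cases "a = b")
  case True then show ?thesis by simp
next
  case False
  then have ab: "a < b" using assms by simp
  have "\<And>x. a \<le> x \<Longrightarrow> x \<le> b \<Longrightarrow> DERIV (\<lambda>x. x powr (1-al)) x :> (1-al) * x powr (1-al-1)"
    using assms by (auto intro!: derivative_eq_intros)
  from MVT2[OF ab this] obtain z where z: "a < z" "z < b"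
    "b powr (1-al) - a powr (1-al) = (b-a) * ((1-al) * z powr (1-al-1))" by blast
  have "b powr (-al) \<le> z powr (-al)"
    using z assms by (intro powr_mono2') auto
  then have "(al-1)*(b-a)*b powr (-al) \<le> (al-1)*(b-a)*z powr (-al)"
    using assms ab by (intro mult_left_mono) auto
  also have "\<dots> = a powr (1-al) - b powr (1-al)" using z by (simp add: algebra_simps)
  finally show ?thesis .
qed

lemma prob_bound:
  fixes M :: "'a measure" and X :: "nat \<Rightarrow> 'a \<Rightarrow> real" and \<epsilon> t :: real and N :: nat
  assumes P: "prob_space M"
    and rv: "\<And>i. X i \<in> borel_measurable M"
    and ident: "\<And>i. distr M borel (X i) = distr M borel (X 0)"
    and eps: "\<epsilon> > 0"
    and mom: "integrable M (\<lambda>\<omega>. \<bar>X 0 \<omega>\<bar> powr (2 + \<epsilon>))"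
    and t: "t > 0"
  shows "measure M (\<Union>j\<in>{1..N}. {\<omega>\<in>space M. t < X j \<omega>}) \<le>
         real N * (\<integral>\<omega>. (max (X 0 \<omega>) 0) powr (2 + \<epsilon>) \<partial>M) / t powr (2+\<epsilon>)"
proof -
  interpret prob_space M by (rule P)
  define u where "u = (\<lambda>\<omega>. (max (X 0 \<omega>) 0) powr (2 + \<epsilon>))"
  have rv'[measurable]: "X i \<in> borel_measurable M" for i by (rule rv)
  have sets: "{\<omega>\<in>space M. t < X j \<omega>} \<in> sets M" for j by measurable
  have ui: "integrable M u"
    unfolding u_def
    apply (rule Bochner_Integration.integrable_bound[OF mom])
     apply measurable
    using eps apply (auto intro!: AE_I2 powr_mono2)
    done
  have eq: "measure M {\<omega>\<in>space M. t < X j \<omega>} = measure M {\<omega>\<in>space M. t < X 0 \<omega>}" for j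
  proof -
    have "measure M {\<omega>\<in>space M. t < X j \<omega>} = measure (distr M borel (X j)) {t<..}"
      by (subst measure_distr) (auto intro!: arg_cong[where f="measure M"])
    also have "\<dots> = measure (distr M borel (X 0)) {t<..}" by (subst ident[of j]) (rule refl)
    also have "\<dots> = measure M {\<omega>\<in>space M. t < X 0 \<omega>}"
      by (subst measure_distr) (auto intro!: arg_cong[where f="measure M"])
    finally show ?thesis .
  qed
  have mk: "measure M {\<omega>\<in>space M. t < X 0 \<omega>} \<le> (\<integral>\<omega>. u \<omega> \<partial>M) / t powr (2+\<epsilon>)"
  proof -
    have "measure M {\<omega>\<in>space M. t < X 0 \<omega>} \<le> measure M {\<omega>\<in>space M. t powr (2+\<epsilon>) \<le> u \<omega>}"
      apply (rule finite_measure_mono)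
      using t eps apply (auto simp: u_def intro!: powr_mono2)[1]
      using borel_measurable_integrable[OF ui] by measurable
    also have "\<dots> \<le> (\<integral>\<omega>. u \<omega> \<partial>M) / t powr (2+\<epsilon>)"
      by (rule integral_Markov_inequality_measure[OF ui, where A="space M"]) (use t in \<open>auto simp: u_def\<close>)
    finally show ?thesis .
  qed
  have "measure M (\<Union>j\<in>{1..N}. {\<omega>\<in>space M. t < X j \<omega>}) \<le> (\<Sum>j\<in>{1..N}. measure M {\<omega>\<in>space M. t < X j \<omega>})"
    by (rule finite_measure_subadditive_finite) (use sets in auto)
  also have "\<dots> = (\<Sum>j\<in>{1..N}. measure M {\<omega>\<in>space M. t < X 0 \<omega>})"
    by (rule sum.cong[OF refl eq])
  also have "\<dots> = real N * measure M {\<omega>\<in>space M. t < X 0 \<omega>}" by simp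
  also have "\<dots> \<le> real N * ((\<integral>\<omega>. u \<omega> \<partial>M) / t powr (2+\<epsilon>))"
    by (intro mult_left_mono mk) auto
  finally show ?thesis by (simp add: u_def)
qed


theorem lemma3:
  fixes M :: "'a measure" and X :: "nat \<Rightarrow> 'a \<Rightarrow> real"
    and \<epsilon> \<mu> m \<delta> \<alpha> :: real
  assumes P: "prob_space M"
    and rv: "\<And>i. X i \<in> borel_measurable M"
    and indep: "prob_space.indep_vars M (\<lambda>_. borel) X UNIV"
    and ident: "\<And>i. distr M borel (X i) = distr M borel (X 0)"
    and eps: "\<epsilon> > 0"
    and mom: "integrable M (\<lambda>\<omega>. \<bar>X 0 \<omega>\<bar> powr (2 + \<epsilon>))"
    and int: "integrable M (X 0)"
    and mean: "(\<integral>\<omega>. X 0 \<omega> \<partial>M) = 0"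
    and mu: "\<mu> > 0" and m: "m \<ge> 1"
    and delta: "0 < \<delta>" "\<delta> \<le> 1/2"
    and alpha: "2 < \<alpha>" "\<alpha> \<le> (2 + \<epsilon>) * (1 - \<delta>)"
    and cond: "6 * 2 powr \<alpha> / ((\<alpha> - 1) * (m + 1) powr (\<alpha> - 1) * \<mu>)
                 * (\<integral>\<omega>. (max (X 0 \<omega>) 0) powr (2 + \<epsilon>) \<partial>M) \<le> 1"
  shows "\<forall>k\<ge>2. 3 * measure M (space M - Bev M X \<mu> m \<delta> k) / gfun \<alpha> m \<mu> k \<le> 1"
proof (intro allI impI)
  fix k :: nat assume k: "k \<ge> 2"
  interpret prob_space M by (rule P)
  define n where "n = nblk (k-1)"
  define E where "E = (\<integral>\<omega>. (max (X 0 \<omega>) 0) powr (2 + \<epsilon>) \<partial>M)"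
  define A where "A = \<mu> * real n + m"
  define t where "t = A powr (1-\<delta>)"
  define D where "D = 2 powr \<alpha>"
  define K where "K = (m+1) powr (\<alpha>-1)"
  have nk: "nblk k = 2 * n"
  proof -
    have kj: "k = (k-2) + 2" using k by simp
    show ?thesis unfolding n_def nblk_def by (subst (1 2) kj) simp
  qed
  have n1: "real n \<ge> 1" unfolding n_def nblk_def by simp
  have nb1: "nblk 1 = 1" by (simp add: nblk_def)
  have A1: "A \<ge> 1" unfolding A_def using mu m n1 by (smt (verit) mult_nonneg_nonneg of_nat_0_le_iff)
  have tpos: "t > 0" unfolding t_def using A1 by simp
  have E0: "E \<ge> 0" unfolding E_def by (intro integral_nonneg_AE) auto
  have Dpos: "D > 0" "K > 0" unfolding D_def K_def using m by auto
  have seteq: "space M - Bev M X \<mu> m \<delta> k = (\<Union>j\<in>{1..nblk k - 1}. {\<omega>\<in>space M. t < X j \<omega>})"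
    unfolding Bev_def t_def A_def n_def by (auto simp: not_le mult.commute)
  have Pb: "measure M (space M - Bev M X \<mu> m \<delta> k) \<le> real (nblk k - 1) * E / t powr (2+\<epsilon>)"
    unfolding seteq E_def by (rule prob_bound[where M=M and X=X and \<epsilon>=\<epsilon> and t=t, OF P rv ident eps mom tpos])
  have tA: "A powr \<alpha> \<le> t powr (2+\<epsilon>)"
  proof -
    have "t powr (2+\<epsilon>) = A powr ((2+\<epsilon>)*(1-\<delta>))" unfolding t_def by (simp add: powr_powr mult.commute)
    moreover have "A powr \<alpha> \<le> A powr ((2+\<epsilon>)*(1-\<delta>))" using A1 alpha by (intro powr_mono) auto
    ultimately show ?thesis by simp
  qed
  have Aapos: "A powr \<alpha> > 0" using A1 by simp
  have P2: "measure M (space M - Bev M X \<mu> m \<delta> k) \<le> 2 * real n * E / A powr \<alpha>"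
  proof -
    have "real (nblk k - 1) * E / t powr (2+\<epsilon>) \<le> (2 * real n) * E / t powr (2+\<epsilon>)"
      using E0 tpos nk by (intro divide_right_mono mult_right_mono) auto
    also have "\<dots> \<le> 2 * real n * E / A powr \<alpha>"
      using E0 n1 tA Aapos tpos by (intro divide_left_mono) auto
    finally show ?thesis using Pb by simp
  qed
  define a where "a = 1 + m + \<mu> * real n"
  define b where "b = 1 + m + 2 * \<mu> * real n"
  define c where "c = 1 + m + \<mu>"
  have al1: "\<alpha> > 1" using alpha by simp
  have munpos: "\<mu> * real n > 0" using mu n1 by simp
  have apos: "a > 0" unfolding a_def using munpos m by linarith
  have ab: "a \<le> b" unfolding a_def b_def using munpos by simp
  have g_eq: "gfun \<alpha> m \<mu> k = (a powr (1-\<alpha>) - b powr (1-\<alpha>)) / c powr (1-\<alpha>)"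
  proof -
    have "gfun \<alpha> m \<mu> k = ((a powr (1-\<alpha>)/(\<alpha>-1)) - (b powr (1-\<alpha>)/(\<alpha>-1))) / (c powr (1-\<alpha>)/(\<alpha>-1))"
      unfolding gfun_def nk nb1 a_def b_def c_def n_def[symmetric]
      using m mu n1 al1
      by (subst (1 2 3) Gbar_eq) (auto simp: add_ac mult_ac)
    moreover have "(x/d - y/d)/(z/d) = (x-y)/z" if "d \<noteq> 0" for x y z d :: real
      using that by (cases "z = 0") (simp_all add: field_simps)
    ultimately show ?thesis using al1 by simp
  qed
  have num: "(\<alpha>-1) * (\<mu> * real n) * (1 / (D * A powr \<alpha>)) \<le> a powr (1-\<alpha>) - b powr (1-\<alpha>)"
  proof -
    have "b powr (-\<alpha>) \<ge> (2*A) powr (-\<alpha>)"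
      using A1 m al1 munpos unfolding b_def A_def by (intro powr_mono2') auto
    also have "(2*A) powr (-\<alpha>) = 1 / (D * A powr \<alpha>)"
      unfolding D_def using A1 by (simp add: powr_minus powr_mult divide_simps)
    finally have bb: "1 / (D * A powr \<alpha>) \<le> b powr (-\<alpha>)" .
    have "(\<alpha>-1) * (\<mu> * real n) * (1 / (D * A powr \<alpha>)) \<le> (\<alpha>-1) * (\<mu> * real n) * b powr (-\<alpha>)"
      using bb al1 mu n1 by (intro mult_left_mono) auto
    also have "\<dots> = (\<alpha>-1)*(b-a)*b powr (-\<alpha>)" unfolding a_def b_def by simp
    also have "\<dots> \<le> a powr (1-\<alpha>) - b powr (1-\<alpha>)"
      using al1 by (intro mvt_ineq apos ab)
    finally show ?thesis .
  qed
  have numpos: "a powr (1-\<alpha>) - b powr (1-\<alpha>) > 0"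
  proof -
    have "(\<alpha>-1) * (\<mu> * real n) * (1 / (D * A powr \<alpha>)) > 0" using al1 mu n1 Dpos Aapos by simp
    then show ?thesis using num by linarith
  qed
  have den: "c powr (1-\<alpha>) \<le> 1 / K"
  proof -
    have "c powr (1-\<alpha>) \<le> (1+m) powr (1-\<alpha>)" unfolding c_def using m mu al1 by (intro powr_mono2') auto
    also have "\<dots> = 1/K" unfolding K_def using m by (simp add: powr_minus_divide[symmetric] powr_minus add.commute)
    finally show ?thesis .
  qed
  have cpos: "c powr (1-\<alpha>) > 0" unfolding c_def using m mu by simp
  have g_ge: "(a powr (1-\<alpha>) - b powr (1-\<alpha>)) * K \<le> gfun \<alpha> m \<mu> k"
  proof -
    have "(a powr (1-\<alpha>) - b powr (1-\<alpha>)) / (1/K) \<le> (a powr (1-\<alpha>) - b powr (1-\<alpha>)) / c powr (1-\<alpha>)"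
      using numpos cpos den Dpos by (intro divide_left_mono) auto
    then show ?thesis using g_eq by simp
  qed
  have gpos: "gfun \<alpha> m \<mu> k > 0" using g_eq numpos cpos by simp
  have condE: "6 * D * E \<le> (\<alpha>-1) * K * \<mu>"
  proof -
    have pos: "(\<alpha> - 1) * K * \<mu> > 0" using al1 Dpos mu by simp
    from cond have "6 * D / ((\<alpha> - 1) * K * \<mu>) * E \<le> 1" unfolding D_def K_def E_def .
    then show ?thesis using pos by (simp add: field_simps)
  qed
  have "3 * measure M (space M - Bev M X \<mu> m \<delta> k) \<le> 6 * real n * E / A powr \<alpha>"
    using P2 by simp
  also have "\<dots> = real n * (6 * D * E) * (1 / (D * A powr \<alpha>))" using Dpos Aapos by (simp add: field_simps)
  also have "\<dots> \<le> real n * ((\<alpha>-1) * K * \<mu>) * (1 / (D * A powr \<alpha>))"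
    using condE n1 Dpos Aapos by (intro mult_right_mono mult_left_mono) auto
  also have "\<dots> = ((\<alpha>-1) * (\<mu> * real n) * (1 / (D * A powr \<alpha>))) * K" by simp
  also have "\<dots> \<le> (a powr (1-\<alpha>) - b powr (1-\<alpha>)) * K"
    using num Dpos by (intro mult_right_mono) auto
  also have "\<dots> \<le> gfun \<alpha> m \<mu> k" by (rule g_ge)
  finally show "3 * measure M (space M - Bev M X \<mu> m \<delta> k) / gfun \<alpha> m \<mu> k \<le> 1"
    using gpos by simp
qed
end
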